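(* For a positive integer $n$, let \[ Z^{+}(n)=\sum_{k=0}^{n-1}\frac{(-1)^{k}+k!\,(n-k-1)!}{n}. \] Then $Z^{+}(n)$ is a natural number if and only if $n$ is even or $n$ is non-composite (i.e. $n=1$ or $n$ is prime).
   Context: $Z^{+}(n)=\sum_{k=0}^{n-1}(-1)^kM_k(n)$ where $M_{k}(n)=\frac{1+(-1)^{k}k!(n-k-1)!}{n}$ for $0\le k\le n-1$. *)

theory Defs
  imports Complex_Main "HOL-Computational_Algebra.Primes"
begin

definition Zplus :: "nat \<Rightarrow> rat" where
  "Zplus n = (\<Sum>k = 0..n-1. ((-1) ^ k + of_nat (fact k * fact (n - k - 1))) / of_nat n)"

end

theory Submission
  imports Defs "HOL-Number_Theory.Number_Theory"
begin

definition TT :: "nat \<Rightarrow> nat \<Rightarrow> nat" where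
  "TT n k = fact k * fact (n - k - 1)"

lemma alt_sum: "(\<Sum>k<n. (-1::int)^k) = (if even n then 0 else 1)"
  by (induction n) auto

lemma Zplus_eq:
  assumes "n \<ge> 1"
  shows "Zplus n = of_int ((\<Sum>k<n. (-1::int)^k) + int (\<Sum>k<n. TT n k)) / of_nat n"
proof -
  have "{0..n-1} = {..<n}" using assms by auto
  then have "Zplus n = (\<Sum>k<n. ((-1) ^ k + of_nat (TT n k)) / (of_nat n::rat))"
    unfolding Zplus_def TT_def by simp
  also have "\<dots> = (\<Sum>k<n. ((-1) ^ k + of_nat (TT n k))) / (of_nat n::rat)"
    by (simp add: sum_divide_distrib)
  also have "\<dots> = of_int ((\<Sum>k<n. (-1::int)^k) + int (\<Sum>k<n. TT n k)) / of_nat n"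
    by (simp add: sum.distrib of_int_sum)
  finally show ?thesis .
qed

lemma nat_iff:
  fixes S :: int
  assumes "S \<ge> 0" "n > 0"
  shows "(of_int S / of_nat n :: rat) \<in> \<nat> \<longleftrightarrow> int n dvd S"
proof
  assume "(of_int S / of_nat n :: rat) \<in> \<nat>"
  then obtain m where "(of_int S / of_nat n :: rat) = of_nat m" by (auto elim: Nats_cases)
  then have "(of_int S :: rat) = of_int (int n * int m)" using assms by (simp add: field_simps)
  then have "S = int n * int m" by linarith
  then show "int n dvd S" by simp
next
  assume "int n dvd S"
  then obtain c where c: "S = int n * c" by auto
  then have "c \<ge> 0" using assms by (simp add: zero_le_mult_iff)
  have "(of_int S / of_nat n :: rat) = of_int c" using c assms by simp
  also have "\<dots> = of_nat (nat c)" using \<open>c \<ge> 0\<close> by simp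
  finally show "(of_int S / of_nat n :: rat) \<in> \<nat>" by simp
qed

lemma even_case:
  assumes "n = 2 * m"
  shows "n dvd (\<Sum>k<n. TT n k)"
proof -
  have split: "(\<Sum>k<n. TT n k) = (\<Sum>k<m. TT n k) + (\<Sum>k<m. TT n (m + k))"
    using assms by (simp add: sum.atLeastLessThan_concat[symmetric] mult_2 lessThan_atLeast0
        sum.shift_bounds_nat_ivl[symmetric] add.commute)
  have "(\<Sum>k<m. TT n (m + k)) = (\<Sum>k<m. TT n (m + (m - Suc k)))"
    by (rule sum.nat_diff_reindex[symmetric])
  also have "\<dots> = (\<Sum>k<m. TT n k)"
  proof (rule sum.cong)
    fix k assume "k \<in> {..<m}"
    then have "m + (m - Suc k) = n - k - 1" "n - (m + (m - Suc k)) - 1 = k" using assms by auto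
    then show "TT n (m + (m - Suc k)) = TT n k" unfolding TT_def by simp
  qed simp
  finally have "(\<Sum>k<n. TT n k) = 2 * (\<Sum>k<m. TT n k)" using split by simp
  moreover have "m dvd (\<Sum>k<m. TT n k)"
  proof (rule dvd_sum)
    fix k assume "k \<in> {..<m}"
    then have "m \<le> n - k - 1" "0 < m" using assms by auto
    then have "m dvd fact (n - k - 1)" by (simp add: dvd_fact)
    then show "m dvd TT n k" unfolding TT_def by simp
  qed
  ultimately show ?thesis using assms by simp
qed

lemma prime_step:
  assumes p: "prime p" and k: "k < p"
  shows "int p dvd (int (TT p k) - (-1)^(k+1))"
  using k
proof (induction k)
  case 0
  have "[fact (p - 1) = - 1] (mod int p)" using wilson_theorem[OF p] .
  then show ?case unfolding TT_def by (simp add: cong_iff_dvd_diff of_nat_fact)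
next
  case (Suc k)
  have IH: "int p dvd (int (TT p k) - (-1)^(k+1))" using Suc by simp
  define j where "j = p - k - 2"
  have j: "p - k - 1 = Suc j" "p - Suc k - 1 = j" using Suc.prems unfolding j_def by arith+
  have eq: "TT p (Suc k) * (p - k - 1) = (k+1) * TT p k"
    unfolding TT_def j by (simp add: algebra_simps)
  have "int (TT p (Suc k)) * (int p - int k - 1) = int (k+1) * int (TT p k)"
  proof -
    have d: "int (p - k - 1) = int p - int k - 1" using Suc.prems by simp
    have "int (TT p (Suc k)) * int (p - k - 1) = int (k+1) * int (TT p k)"
      using arg_cong[OF eq, of int] by (simp only: of_nat_mult)
    then show ?thesis unfolding d .
  qed
  then have "int (k+1) * (int (TT p k) + int (TT p (Suc k))) = int (TT p (Suc k)) * int p"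
    by (simp add: algebra_simps)
  then have "int p dvd int (k+1) * (int (TT p k) + int (TT p (Suc k)))" by simp
  moreover have "\<not> int p dvd int (k+1)"
  proof
    assume "int p dvd int (k+1)"
    then have "p dvd k+1" by (simp only: of_nat_dvd_iff)
    then have "p \<le> k+1" by (rule dvd_imp_le) simp
    then show False using Suc.prems by simp
  qed
  moreover have "prime (int p)" using p by simp
  ultimately have "int p dvd (int (TT p k) + int (TT p (Suc k)))"
    using prime_dvd_mult_iff by blast
  then have "int p dvd (int (TT p k) + int (TT p (Suc k))) - (int (TT p k) - (-1)^(k+1))"
    using IH by (rule dvd_diff)
  then show ?case by (simp add: algebra_simps)
qed

lemma prime_case:
  assumes p: "prime p"
  shows "int p dvd ((\<Sum>k<p. (-1::int)^k) + int (\<Sum>k<p. TT p k))"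
proof -
  have "int p dvd (\<Sum>k<p. int (TT p k) - (-1)^(k+1))"
    by (rule dvd_sum) (use prime_step[OF p] in auto)
  also have "(\<Sum>k<p. int (TT p k) - (-1)^(k+1)) = (\<Sum>k<p. (-1::int)^k) + int (\<Sum>k<p. TT p k)"
    by (simp add: sum.distrib sum_subtractf of_nat_sum)
  finally show ?thesis .
qed

lemma composite_case:
  assumes n: "odd n" "n > 1" "\<not> prime n"
  shows "\<not> int n dvd ((\<Sum>k<n. (-1::int)^k) + int (\<Sum>k<n. TT n k))"
proof
  assume H: "int n dvd ((\<Sum>k<n. (-1::int)^k) + int (\<Sum>k<n. TT n k))"
  obtain q where q: "prime q" "q dvd n" using n prime_factor_nat[of n] by auto
  then obtain m where m: "n = q * m" by auto
  have q2: "q \<ge> 2" using q prime_ge_2_nat by auto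
  have "m \<noteq> 1" using m q n by auto
  moreover have "odd m" using m n by auto
  moreover have "m \<noteq> 0" using m n by auto
  ultimately have "m \<ge> 3" by presburger
  then have "n \<ge> 3 * q" using m by simp
  have "q dvd (\<Sum>k<n. TT n k)"
  proof (rule dvd_sum)
    fix k assume "k \<in> {..<n}"
    show "q dvd TT n k"
    proof (cases "k \<ge> q")
      case True
      then have "q dvd fact k" using q2 by (simp add: dvd_fact)
      then show ?thesis unfolding TT_def by simp
    next
      case False
      then have "q \<le> n - k - 1" using \<open>n \<ge> 3 * q\<close> by simp
      then have "q dvd fact (n - k - 1)" using q2 by (simp add: dvd_fact)
      then show ?thesis unfolding TT_def by simp
    qed
  qed
  then have "int q dvd int (\<Sum>k<n. TT n k)" by (simp only: of_nat_dvd_iff)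
  moreover have "int q dvd (1 + int (\<Sum>k<n. TT n k))"
    using H alt_sum[of n] n q(2) by (metis dvd_trans of_nat_dvd_iff)
  ultimately have "int q dvd 1"
    by (metis add_diff_cancel_right' dvd_diff)
  then show False using q2 by simp
qed

theorem theorem2:
  fixes n :: nat
  assumes "n \<ge> 1"
  shows "Zplus n \<in> \<nat> \<longleftrightarrow> (even n \<or> n = 1 \<or> prime n)"
proof -
  have S0: "(\<Sum>k<n. (-1::int)^k) + int (\<Sum>k<n. TT n k) \<ge> 0"
    using alt_sum[of n] by (simp del: of_nat_sum)
  have iff: "Zplus n \<in> \<nat> \<longleftrightarrow> int n dvd ((\<Sum>k<n. (-1::int)^k) + int (\<Sum>k<n. TT n k))"
    unfolding Zplus_eq[OF assms] using nat_iff[OF S0] assms by simp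
  show ?thesis
  proof (cases "even n")
    case True
    then obtain m where "n = 2 * m" by auto
    then have "n dvd (\<Sum>k<n. TT n k)" by (rule even_case)
    then show ?thesis using iff True alt_sum[of n] by (simp del: of_nat_sum)
  next
    case odd: False
    show ?thesis
    proof (cases "n = 1")
      case True
      then show ?thesis using iff by simp
    next
      case False
      show ?thesis
      proof (cases "prime n")
        case True
        then show ?thesis using iff prime_case by auto
      next
        case np: False
        then show ?thesis using iff composite_case[of n] odd False assms by auto
      qed
    qed
  qed
qed

end
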